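(* Let $\mathbb{B}$ be a category with finite limits, in which every morphism is regarded as small, and let $\mathbf{C}=(C_0,C_1,d_0,d_1,c,i)$ be an internal category in $\mathbb{B}$. Then the externalization $\mathbf{proj}:\mathrm{Fam}(\mathbf{C})\to\mathbb{B}$ is a concrete fibration over $\mathbb{B}$.
   Context: An internal category consists of objects $C_0,C_1$, domain/codomain $d_0,d_1:C_1\to C_0$, composition $c:C_1\times_{C_0}C_1\to C_1$, identity $i:C_0\to C_1$ satisfying the usual axioms. $\mathrm{Fam}(\mathbf{C})$ has objects $(I,X)$ with $X:I\to C_0$, morphisms $(u,f):(I,X)\to(J,Y)$ with $u:I\to J$, $f:I\to C_1$, $d_0f=X$, $d_1f=Yu$, composition $(v,g)\circ(u,f)=(vu,c\circ\langle gu,f\rangle)$, identities $(\mathrm{id}_I,iX)$; $\mathbf{proj}(I,X)=I$ is a fibration (the externalization). A concrete fibration over $\mathbb{B}$ is a fibration $P:\mathbb{X}\to\mathbb{B}$ together with a faithful fibered functor $U$ over $\mathbb{B}$ from $P$ to the codomain fibration $\mathbf{cod}:\mathbb{B}^{\to}\to\mathbb{B}$ (so $U$ commutes with the projections to $\mathbb{B}$ and preserves cartesian morphisms), such that for every object $X$, $UX$ is a small morphism $|X|\to PX$, and $U$ sends each $f:X\to Y$ to a commuting square with top $|f|:|X|\to|Y|$ and bottom $Pf$. *)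

theory Defs
  imports Main
begin

record ('o, 'm) category =
  cat_obj  :: "'o set"
  cat_arr  :: "'m set"
  cat_dom  :: "'m \<Rightarrow> 'o"
  cat_cod  :: "'m \<Rightarrow> 'o"
  cat_id   :: "'o \<Rightarrow> 'm"
  cat_comp :: "'m \<Rightarrow> 'm \<Rightarrow> 'm"   (* cat_comp C g f = g o f *)

definition hom :: "('o, 'm) category \<Rightarrow> 'o \<Rightarrow> 'o \<Rightarrow> 'm set" where
  "hom C x y = {f \<in> cat_arr C. cat_dom C f = x \<and> cat_cod C f = y}"

definition is_category :: "('o, 'm) category \<Rightarrow> bool" where
  "is_category C \<longleftrightarrow>
     (\<forall>f \<in> cat_arr C. cat_dom C f \<in> cat_obj C \<and> cat_cod C f \<in> cat_obj C) \<and>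
     (\<forall>x \<in> cat_obj C. cat_id C x \<in> hom C x x) \<and>
     (\<forall>f \<in> cat_arr C. \<forall>g \<in> cat_arr C. cat_cod C f = cat_dom C g \<longrightarrow>
        cat_comp C g f \<in> hom C (cat_dom C f) (cat_cod C g)) \<and>
     (\<forall>f \<in> cat_arr C. cat_comp C (cat_id C (cat_cod C f)) f = f \<and>
                       cat_comp C f (cat_id C (cat_dom C f)) = f) \<and>
     (\<forall>f \<in> cat_arr C. \<forall>g \<in> cat_arr C. \<forall>h \<in> cat_arr C.
        cat_cod C f = cat_dom C g \<longrightarrow> cat_cod C g = cat_dom C h \<longrightarrow>
        cat_comp C h (cat_comp C g f) = cat_comp C (cat_comp C h g) f)"

definition is_terminal :: "('o, 'm) category \<Rightarrow> 'o \<Rightarrow> bool" where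
  "is_terminal C t \<longleftrightarrow> t \<in> cat_obj C \<and> (\<forall>x \<in> cat_obj C. \<exists>!f. f \<in> hom C x t)"

definition is_pullback :: "('o, 'm) category \<Rightarrow> 'm \<Rightarrow> 'm \<Rightarrow> 'm \<Rightarrow> 'm \<Rightarrow> bool" where
  "is_pullback C f g p q \<longleftrightarrow>
     f \<in> cat_arr C \<and> g \<in> cat_arr C \<and> p \<in> cat_arr C \<and> q \<in> cat_arr C \<and>
     cat_cod C f = cat_cod C g \<and> cat_dom C p = cat_dom C q \<and>
     cat_cod C p = cat_dom C f \<and> cat_cod C q = cat_dom C g \<and>
     cat_comp C f p = cat_comp C g q \<and>
     (\<forall>a \<in> cat_arr C. \<forall>b \<in> cat_arr C.
        cat_dom C a = cat_dom C b \<longrightarrow> cat_cod C a = cat_dom C f \<longrightarrow>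
        cat_cod C b = cat_dom C g \<longrightarrow> cat_comp C f a = cat_comp C g b \<longrightarrow>
        (\<exists>!h. h \<in> hom C (cat_dom C a) (cat_dom C p) \<and>
              cat_comp C p h = a \<and> cat_comp C q h = b))"

definition has_finite_limits :: "('o, 'm) category \<Rightarrow> bool" where
  "has_finite_limits C \<longleftrightarrow>
     (\<exists>t. is_terminal C t) \<and>
     (\<forall>f \<in> cat_arr C. \<forall>g \<in> cat_arr C. cat_cod C f = cat_cod C g \<longrightarrow>
        (\<exists>p q. is_pullback C f g p q))"

definition is_functor ::
  "('a, 'b) category \<Rightarrow> ('c, 'd) category \<Rightarrow> ('a \<Rightarrow> 'c) \<Rightarrow> ('b \<Rightarrow> 'd) \<Rightarrow> bool" where
  "is_functor A B Fo Fm \<longleftrightarrow>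
     is_category A \<and> is_category B \<and>
     (\<forall>x \<in> cat_obj A. Fo x \<in> cat_obj B) \<and>
     (\<forall>f \<in> cat_arr A. Fm f \<in> hom B (Fo (cat_dom A f)) (Fo (cat_cod A f))) \<and>
     (\<forall>x \<in> cat_obj A. Fm (cat_id A x) = cat_id B (Fo x)) \<and>
     (\<forall>f \<in> cat_arr A. \<forall>g \<in> cat_arr A. cat_cod A f = cat_dom A g \<longrightarrow>
        Fm (cat_comp A g f) = cat_comp B (Fm g) (Fm f))"

definition faithful ::
  "('a, 'b) category \<Rightarrow> ('b \<Rightarrow> 'd) \<Rightarrow> bool" where
  "faithful A Fm \<longleftrightarrow>
     (\<forall>f \<in> cat_arr A. \<forall>g \<in> cat_arr A.
        cat_dom A f = cat_dom A g \<longrightarrow> cat_cod A f = cat_cod A g \<longrightarrow> Fm f = Fm g \<longrightarrow> f = g)"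

definition is_cartesian ::
  "('a, 'b) category \<Rightarrow> ('c, 'd) category \<Rightarrow> ('a \<Rightarrow> 'c) \<Rightarrow> ('b \<Rightarrow> 'd) \<Rightarrow> 'b \<Rightarrow> bool" where
  "is_cartesian A B Po Pm f \<longleftrightarrow>
     f \<in> cat_arr A \<and>
     (\<forall>g \<in> cat_arr A. cat_cod A g = cat_cod A f \<longrightarrow>
       (\<forall>w \<in> hom B (Po (cat_dom A g)) (Po (cat_dom A f)).
          cat_comp B (Pm f) w = Pm g \<longrightarrow>
          (\<exists>!h. h \<in> hom A (cat_dom A g) (cat_dom A f) \<and> Pm h = w \<and> cat_comp A f h = g)))"

definition is_fibration ::
  "('a, 'b) category \<Rightarrow> ('c, 'd) category \<Rightarrow> ('a \<Rightarrow> 'c) \<Rightarrow> ('b \<Rightarrow> 'd) \<Rightarrow> bool" where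
  "is_fibration A B Po Pm \<longleftrightarrow>
     is_functor A B Po Pm \<and>
     (\<forall>Y \<in> cat_obj A. \<forall>u \<in> cat_arr B. cat_cod B u = Po Y \<longrightarrow>
        (\<exists>f \<in> cat_arr A. cat_cod A f = Y \<and> Pm f = u \<and> is_cartesian A B Po Pm f))"

text \<open>Objects: arrows of B. A morphism a -> a' is (a, (t, b), a') with a' o t = b o a
  (t = top, b = bottom).\<close>
definition arrow_cat :: "('o, 'm) category \<Rightarrow> ('m, 'm \<times> ('m \<times> 'm) \<times> 'm) category" where
  "arrow_cat B = \<lparr>
     cat_obj = cat_arr B,
     cat_arr = {(a, (t, b), a') | a t b a'. a \<in> cat_arr B \<and> a' \<in> cat_arr B \<and>
                  t \<in> hom B (cat_dom B a) (cat_dom B a') \<and>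
                  b \<in> hom B (cat_cod B a) (cat_cod B a') \<and>
                  cat_comp B a' t = cat_comp B b a},
     cat_dom = (\<lambda>(a, _, _). a),
     cat_cod = (\<lambda>(_, _, a'). a'),
     cat_id = (\<lambda>a. (a, (cat_id B (cat_dom B a), cat_id B (cat_cod B a)), a)),
     cat_comp = (\<lambda>(_, (t', b'), a'') (a, (t, b), _).
                   (a, (cat_comp B t' t, cat_comp B b' b), a'')) \<rparr>"

definition cod_obj :: "('o, 'm) category \<Rightarrow> 'm \<Rightarrow> 'o" where
  "cod_obj B a = cat_cod B a"

definition cod_arr :: "'m \<times> ('m \<times> 'm) \<times> 'm \<Rightarrow> 'm" where
  "cod_arr s = (case s of (_, (_, b), _) \<Rightarrow> b)"

definition top_arr :: "'m \<times> ('m \<times> 'm) \<times> 'm \<Rightarrow> 'm" where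
  "top_arr s = (case s of (_, (t, _), _) \<Rightarrow> t)"

text \<open>P = (Po, Pm) : X -> B is a concrete fibration (w.r.t. the class of small morphisms
  given by the predicate small) if it is a fibration and there is a faithful fibered functor
  U = (Uo, Um) : X -> B^-> over B (cod o U = P, U preserves cartesian arrows) such that
  each U x is small; U x is then a morphism |x| -> P x and U f is the square with top |f|
  and bottom P f.\<close>
definition is_concrete_fibration ::
  "('o, 'm) category \<Rightarrow> ('m \<Rightarrow> bool) \<Rightarrow> ('x, 'y) category \<Rightarrow> ('x \<Rightarrow> 'o) \<Rightarrow> ('y \<Rightarrow> 'm) \<Rightarrow> bool" where
  "is_concrete_fibration B small X Po Pm \<longleftrightarrow>
     is_fibration X B Po Pm \<and>
     (\<exists>(Uo :: 'x \<Rightarrow> 'm) (Um :: 'y \<Rightarrow> 'm \<times> ('m \<times> 'm) \<times> 'm).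
        is_functor X (arrow_cat B) Uo Um \<and>
        faithful X Um \<and>
        (\<forall>x \<in> cat_obj X. cod_obj B (Uo x) = Po x \<and> small (Uo x)) \<and>
        (\<forall>f \<in> cat_arr X. cod_arr (Um f) = Pm f) \<and>
        (\<forall>f \<in> cat_arr X. is_cartesian X B Po Pm f \<longrightarrow>
            is_cartesian (arrow_cat B) B (cod_obj B) cod_arr (Um f)))"

text \<open>C2 together with pi1, pi2 is a (chosen) pullback C1 x_{C0} C1 of d0 (first factor) and
  d1 (second factor): a pair (g, f) is composable when d0 g = d1 f, composite c(g,f) = g o f.\<close>
record ('o, 'm) internal_cat =
  IC0 :: 'o
  IC1 :: 'o
  Id0 :: 'm
  Id1 :: 'm
  Icomp :: 'm
  Iident :: 'm
  IC2 :: 'o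
  Ipi1 :: 'm
  Ipi2 :: 'm

definition ic_pair :: "('o, 'm) category \<Rightarrow> ('o, 'm) internal_cat \<Rightarrow> 'm \<Rightarrow> 'm \<Rightarrow> 'm" where
  "ic_pair B C g f = (THE h. h \<in> hom B (cat_dom B f) (IC2 C) \<and>
                            cat_comp B (Ipi1 C) h = g \<and> cat_comp B (Ipi2 C) h = f)"

text \<open>The composite of generalized elements g, f : I -> C1 with d0 g = d1 f.\<close>
definition ic_mult :: "('o, 'm) category \<Rightarrow> ('o, 'm) internal_cat \<Rightarrow> 'm \<Rightarrow> 'm \<Rightarrow> 'm" where
  "ic_mult B C g f = cat_comp B (Icomp C) (ic_pair B C g f)"

definition is_internal_category :: "('o, 'm) category \<Rightarrow> ('o, 'm) internal_cat \<Rightarrow> bool" where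
  "is_internal_category B C \<longleftrightarrow>
     is_category B \<and>
     IC0 C \<in> cat_obj B \<and> IC1 C \<in> cat_obj B \<and>
     Id0 C \<in> hom B (IC1 C) (IC0 C) \<and> Id1 C \<in> hom B (IC1 C) (IC0 C) \<and>
     Iident C \<in> hom B (IC0 C) (IC1 C) \<and>
     is_pullback B (Id0 C) (Id1 C) (Ipi1 C) (Ipi2 C) \<and> cat_dom B (Ipi1 C) = IC2 C \<and>
     Icomp C \<in> hom B (IC2 C) (IC1 C) \<and>
     cat_comp B (Id0 C) (Iident C) = cat_id B (IC0 C) \<and>
     cat_comp B (Id1 C) (Iident C) = cat_id B (IC0 C) \<and>
     cat_comp B (Id0 C) (Icomp C) = cat_comp B (Id0 C) (Ipi2 C) \<and>
     cat_comp B (Id1 C) (Icomp C) = cat_comp B (Id1 C) (Ipi1 C) \<and>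
     (\<forall>f \<in> cat_arr B. cat_cod B f = IC1 C \<longrightarrow>
        ic_mult B C (cat_comp B (Iident C) (cat_comp B (Id1 C) f)) f = f \<and>
        ic_mult B C f (cat_comp B (Iident C) (cat_comp B (Id0 C) f)) = f) \<and>
     (\<forall>f \<in> cat_arr B. \<forall>g \<in> cat_arr B. \<forall>h \<in> cat_arr B.
        cat_cod B f = IC1 C \<longrightarrow> cat_cod B g = IC1 C \<longrightarrow> cat_cod B h = IC1 C \<longrightarrow>
        cat_dom B f = cat_dom B g \<longrightarrow> cat_dom B g = cat_dom B h \<longrightarrow>
        cat_comp B (Id0 C) g = cat_comp B (Id1 C) f \<longrightarrow>
        cat_comp B (Id0 C) h = cat_comp B (Id1 C) g \<longrightarrow>
        ic_mult B C (ic_mult B C h g) f = ic_mult B C h (ic_mult B C g f))"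

definition Fam :: "('o, 'm) category \<Rightarrow> ('o, 'm) internal_cat \<Rightarrow>
    ('o \<times> 'm, ('o \<times> 'm) \<times> ('m \<times> 'm) \<times> ('o \<times> 'm)) category" where
  "Fam B C = \<lparr>
     cat_obj = {(I, X). I \<in> cat_obj B \<and> X \<in> hom B I (IC0 C)},
     cat_arr = {((I, X), (u, f), (J, Y)) | I X u f J Y.
                  I \<in> cat_obj B \<and> X \<in> hom B I (IC0 C) \<and>
                  J \<in> cat_obj B \<and> Y \<in> hom B J (IC0 C) \<and>
                  u \<in> hom B I J \<and> f \<in> hom B I (IC1 C) \<and>
                  cat_comp B (Id0 C) f = X \<and> cat_comp B (Id1 C) f = cat_comp B Y u},
     cat_dom = (\<lambda>(S, _, _). S),
     cat_cod = (\<lambda>(_, _, T). T),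
     cat_id = (\<lambda>(I, X). ((I, X), (cat_id B I, cat_comp B (Iident C) X), (I, X))),
     cat_comp = (\<lambda>(_, (v, g), T) (S, (u, f), _).
                   (S, (cat_comp B v u, ic_mult B C (cat_comp B g u) f), T)) \<rparr>"

definition proj_obj :: "'o \<times> 'm \<Rightarrow> 'o" where
  "proj_obj S = fst S"

definition proj_arr :: "('o \<times> 'm) \<times> ('m \<times> 'm) \<times> ('o \<times> 'm) \<Rightarrow> 'm" where
  "proj_arr F = (case F of (_, (u, _), _) \<Rightarrow> u)"

end

theory Submission imports Defs begin

locale ctx =
  fixes B :: "('o,'m) category" and C :: "('o,'m) internal_cat"
  assumes cat: "is_category B" and lim: "has_finite_limits B" and ic: "is_internal_category B C"
begin

abbreviation cmp (infixl "\<cdot>" 70) where "g \<cdot> f \<equiv> cat_comp B g f"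
abbreviation "Ar \<equiv> cat_arr B"
abbreviation "Ob \<equiv> cat_obj B"
abbreviation "dm \<equiv> cat_dom B"
abbreviation "cd \<equiv> cat_cod B"
abbreviation "ide \<equiv> cat_id B"
abbreviation "Hom \<equiv> hom B"
abbreviation "C0 \<equiv> IC0 C"
abbreviation "C1 \<equiv> IC1 C"
abbreviation "C2 \<equiv> IC2 C"
abbreviation "d0 \<equiv> Id0 C"
abbreviation "d1 \<equiv> Id1 C"
abbreviation "ii \<equiv> Iident C"
abbreviation "cc \<equiv> Icomp C"
abbreviation "p1 \<equiv> Ipi1 C"
abbreviation "p2 \<equiv> Ipi2 C"
abbreviation "mu \<equiv> ic_mult B C"

lemma homD: "f \<in> Hom x y \<Longrightarrow> f \<in> Ar \<and> dm f = x \<and> cd f = y"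
  by (simp add: hom_def)
lemma homI: "f \<in> Ar \<Longrightarrow> dm f = x \<Longrightarrow> cd f = y \<Longrightarrow> f \<in> Hom x y"
  by (simp add: hom_def)
lemma hom_iff: "f \<in> Hom x y \<longleftrightarrow> f \<in> Ar \<and> dm f = x \<and> cd f = y"
  by (simp add: hom_def)
lemma dom_obj: "f \<in> Ar \<Longrightarrow> dm f \<in> Ob" using cat unfolding is_category_def by blast
lemma cod_obj: "f \<in> Ar \<Longrightarrow> cd f \<in> Ob" using cat unfolding is_category_def by blast
lemma comp_arr: "f \<in> Ar \<Longrightarrow> g \<in> Ar \<Longrightarrow> cd f = dm g \<Longrightarrow> g \<cdot> f \<in> Ar"
  using cat unfolding is_category_def hom_def by blast
lemma dom_comp: "f \<in> Ar \<Longrightarrow> g \<in> Ar \<Longrightarrow> cd f = dm g \<Longrightarrow> dm (g \<cdot> f) = dm f"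
  using cat unfolding is_category_def hom_def by blast
lemma cod_comp: "f \<in> Ar \<Longrightarrow> g \<in> Ar \<Longrightarrow> cd f = dm g \<Longrightarrow> cd (g \<cdot> f) = cd g"
  using cat unfolding is_category_def hom_def by blast
lemma assoc: "f \<in> Ar \<Longrightarrow> g \<in> Ar \<Longrightarrow> h \<in> Ar \<Longrightarrow> cd f = dm g \<Longrightarrow> cd g = dm h \<Longrightarrow>
   h \<cdot> (g \<cdot> f) = (h \<cdot> g) \<cdot> f"
  using cat unfolding is_category_def by blast
lemma id_arr: "x \<in> Ob \<Longrightarrow> ide x \<in> Ar" using cat unfolding is_category_def hom_def by blast
lemma id_dom: "x \<in> Ob \<Longrightarrow> dm (ide x) = x" using cat unfolding is_category_def hom_def by blast
lemma id_cod: "x \<in> Ob \<Longrightarrow> cd (ide x) = x" using cat unfolding is_category_def hom_def by blast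
lemma idl: "f \<in> Ar \<Longrightarrow> cd f = y \<Longrightarrow> ide y \<cdot> f = f" using cat unfolding is_category_def by blast
lemma idr: "f \<in> Ar \<Longrightarrow> dm f = y \<Longrightarrow> f \<cdot> ide y = f" using cat unfolding is_category_def by blast

lemmas cs = comp_arr dom_comp cod_comp id_arr id_dom id_cod idl idr dom_obj cod_obj

lemma pbC: "is_pullback B d0 d1 p1 p2" using ic unfolding is_internal_category_def by blast

lemma ics: "d0 \<in> Ar" "dm d0 = C1" "cd d0 = C0" "d1 \<in> Ar" "dm d1 = C1" "cd d1 = C0"
  "ii \<in> Ar" "dm ii = C0" "cd ii = C1" "cc \<in> Ar" "dm cc = C2" "cd cc = C1"
  "p1 \<in> Ar" "dm p1 = C2" "cd p1 = C1" "p2 \<in> Ar" "dm p2 = C2" "cd p2 = C1"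
  "C0 \<in> Ob" "C1 \<in> Ob" "C2 \<in> Ob"
proof -
  have a: "d0 \<in> Hom C1 C0" "d1 \<in> Hom C1 C0" "ii \<in> Hom C0 C1" "cc \<in> Hom C2 C1" "dm p1 = C2"
     "C0 \<in> Ob" "C1 \<in> Ob"
    using ic unfolding is_internal_category_def by blast+
  have b: "p1 \<in> Ar" "p2 \<in> Ar" "dm p1 = dm p2" "cd p1 = dm d0" "cd p2 = dm d1"
    using pbC unfolding is_pullback_def by blast+
  show "d0 \<in> Ar" "dm d0 = C1" "cd d0 = C0" "d1 \<in> Ar" "dm d1 = C1" "cd d1 = C0"
  "ii \<in> Ar" "dm ii = C0" "cd ii = C1" "cc \<in> Ar" "dm cc = C2" "cd cc = C1"
  "p1 \<in> Ar" "dm p1 = C2" "cd p1 = C1" "p2 \<in> Ar" "dm p2 = C2" "cd p2 = C1"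
  "C0 \<in> Ob" "C1 \<in> Ob" using a b by (simp_all add: hom_def)
  show "C2 \<in> Ob" using a b dom_obj by metis
qed

lemma iceq: "d0 \<cdot> ii = ide C0" "d1 \<cdot> ii = ide C0" "d0 \<cdot> cc = d0 \<cdot> p2" "d1 \<cdot> cc = d1 \<cdot> p1"
  "d0 \<cdot> p1 = d1 \<cdot> p2"
  using ic pbC unfolding is_internal_category_def is_pullback_def by auto

lemma pair: assumes "g \<in> Ar" "cd g = C1" "f \<in> Ar" "cd f = C1" "dm g = dm f" "d0 \<cdot> g = d1 \<cdot> f"
  shows "ic_pair B C g f \<in> Ar \<and> dm (ic_pair B C g f) = dm f \<and> cd (ic_pair B C g f) = C2 \<and>
     p1 \<cdot> ic_pair B C g f = g \<and> p2 \<cdot> ic_pair B C g f = f"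
proof -
  have "\<exists>!h. h \<in> Hom (dm g) (dm p1) \<and> p1 \<cdot> h = g \<and> p2 \<cdot> h = f"
    using pbC assms ics unfolding is_pullback_def by auto
  then have "\<exists>!h. h \<in> Hom (dm f) C2 \<and> p1 \<cdot> h = g \<and> p2 \<cdot> h = f" using assms ics by simp
  from theI'[OF this] show ?thesis unfolding ic_pair_def hom_def by simp
qed

lemma pair_uniq: assumes "g \<in> Ar" "cd g = C1" "f \<in> Ar" "cd f = C1" "dm g = dm f" "d0 \<cdot> g = d1 \<cdot> f"
  and "h \<in> Ar" "dm h = dm f" "cd h = C2" "p1 \<cdot> h = g" "p2 \<cdot> h = f"
  shows "ic_pair B C g f = h"
proof -
  have "\<exists>!h. h \<in> Hom (dm g) (dm p1) \<and> p1 \<cdot> h = g \<and> p2 \<cdot> h = f"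
    using pbC assms ics unfolding is_pullback_def by auto
  then have "\<exists>!h. h \<in> Hom (dm f) C2 \<and> p1 \<cdot> h = g \<and> p2 \<cdot> h = f" using assms ics by simp
  moreover have "h \<in> Hom (dm f) C2 \<and> p1 \<cdot> h = g \<and> p2 \<cdot> h = f" using assms by (simp add: hom_def)
  ultimately show ?thesis unfolding ic_pair_def by (rule the1_equality)
qed

lemma mult: assumes "g \<in> Ar" "cd g = C1" "f \<in> Ar" "cd f = C1" "dm g = dm f" "d0 \<cdot> g = d1 \<cdot> f"
  shows "mu g f \<in> Ar" "dm (mu g f) = dm f" "cd (mu g f) = C1"
    "d0 \<cdot> mu g f = d0 \<cdot> f" "d1 \<cdot> mu g f = d1 \<cdot> g"
proof -
  note P = pair[OF assms]
  show "mu g f \<in> Ar" "dm (mu g f) = dm f" "cd (mu g f) = C1" unfolding ic_mult_def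
    using P ics by (auto simp: cs)
  have "d0 \<cdot> mu g f = (d0 \<cdot> cc) \<cdot> ic_pair B C g f" unfolding ic_mult_def
    using P ics by (simp add: assoc)
  also have "\<dots> = d0 \<cdot> f" using P ics iceq by (simp add: assoc[symmetric])
  finally show "d0 \<cdot> mu g f = d0 \<cdot> f" .
  have "d1 \<cdot> mu g f = (d1 \<cdot> cc) \<cdot> ic_pair B C g f" unfolding ic_mult_def
    using P ics by (simp add: assoc)
  also have "\<dots> = d1 \<cdot> g" using P ics iceq by (simp add: assoc[symmetric])
  finally show "d1 \<cdot> mu g f = d1 \<cdot> g" .
qed

lemma mult_nat: assumes "g \<in> Ar" "cd g = C1" "f \<in> Ar" "cd f = C1" "dm g = dm f" "d0 \<cdot> g = d1 \<cdot> f"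
  and "u \<in> Ar" "cd u = dm f"
  shows "mu (g \<cdot> u) (f \<cdot> u) = mu g f \<cdot> u"
proof -
  note P = pair[OF assms(1-6)]
  have "ic_pair B C (g \<cdot> u) (f \<cdot> u) = ic_pair B C g f \<cdot> u"
    apply (rule pair_uniq)
    using P assms ics by (simp_all add: cs assoc)
  then show ?thesis unfolding ic_mult_def using P assms ics by (simp add: cs assoc)
qed

lemma mult_idl: "f \<in> Ar \<Longrightarrow> cd f = C1 \<Longrightarrow> mu (ii \<cdot> (d1 \<cdot> f)) f = f"
  using ic unfolding is_internal_category_def by blast
lemma mult_idr: "f \<in> Ar \<Longrightarrow> cd f = C1 \<Longrightarrow> mu f (ii \<cdot> (d0 \<cdot> f)) = f"
  using ic unfolding is_internal_category_def by blast
lemma mult_assoc: "f \<in> Ar \<Longrightarrow> g \<in> Ar \<Longrightarrow> h \<in> Ar \<Longrightarrow> cd f = C1 \<Longrightarrow> cd g = C1 \<Longrightarrow> cd h = C1 \<Longrightarrow>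
   dm f = dm g \<Longrightarrow> dm g = dm h \<Longrightarrow> d0 \<cdot> g = d1 \<cdot> f \<Longrightarrow> d0 \<cdot> h = d1 \<cdot> g \<Longrightarrow>
   mu (mu h g) f = mu h (mu g f)"
  using ic unfolding is_internal_category_def by blast


definition FA where "FA I X u f J Y \<longleftrightarrow> I \<in> Ob \<and> X \<in> Ar \<and> dm X = I \<and> cd X = C0 \<and>
   J \<in> Ob \<and> Y \<in> Ar \<and> dm Y = J \<and> cd Y = C0 \<and> u \<in> Ar \<and> dm u = I \<and> cd u = J \<and>
   f \<in> Ar \<and> dm f = I \<and> cd f = C1 \<and> d0 \<cdot> f = X \<and> d1 \<cdot> f = Y \<cdot> u"

abbreviation "FF \<equiv> Fam B C"

lemma Fam_arr: "F \<in> cat_arr FF \<longleftrightarrow> (\<exists>I X u f J Y. F = ((I,X),(u,f),(J,Y)) \<and> FA I X u f J Y)"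
  unfolding Fam_def FA_def hom_def by auto

lemma Fam_arrE: assumes "F \<in> cat_arr FF"
  obtains I X u f J Y where "F = ((I,X),(u,f),(J,Y))" "FA I X u f J Y"
  using assms Fam_arr by blast

lemma Fam_arrI: "FA I X u f J Y \<Longrightarrow> ((I,X),(u,f),(J,Y)) \<in> cat_arr FF"
  using Fam_arr by blast

lemma Fam_obj: "S \<in> cat_obj FF \<longleftrightarrow> (\<exists>I X. S = (I,X) \<and> I \<in> Ob \<and> X \<in> Ar \<and> dm X = I \<and> cd X = C0)"
  unfolding Fam_def hom_def by auto

lemma Fam_simps[simp]: "cat_dom FF (S,x,T) = S" "cat_cod FF (S,x,T) = T"
  "cat_id FF (I,X) = ((I,X),(ide I, ii \<cdot> X),(I,X))"
  "cat_comp FF (S',(v,g),T) (S,(u,f),T') = (S,(v \<cdot> u, mu (g \<cdot> u) f),T)"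
  unfolding Fam_def by simp_all

lemmas ss = cs ics iceq assoc

lemma FA_id: "I \<in> Ob \<Longrightarrow> X \<in> Ar \<Longrightarrow> dm X = I \<Longrightarrow> cd X = C0 \<Longrightarrow> FA I X (ide I) (ii \<cdot> X) I X"
  unfolding FA_def by (simp add: ss)

lemma FA_comp: assumes "FA I X u f J Y" "FA J Y v g K Z"
  shows "FA I X (v \<cdot> u) (mu (g \<cdot> u) f) K Z"
proof -
  have m: "d0 \<cdot> (g \<cdot> u) = d1 \<cdot> f" using assms unfolding FA_def by (simp add: ss)
  have a: "g \<cdot> u \<in> Ar" "cd (g \<cdot> u) = C1" "dm (g \<cdot> u) = dm f" using assms unfolding FA_def by (simp_all add: ss)
  have f: "f \<in> Ar" "cd f = C1" using assms unfolding FA_def by simp_all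
  note M = mult[OF a(1,2) f a(3) m]
  show ?thesis using assms M unfolding FA_def by (simp add: ss)
qed

lemma FA_idl: "FA I X u f J Y \<Longrightarrow> mu ((ii \<cdot> Y) \<cdot> u) f = f"
  unfolding FA_def using mult_idl[of f] by (simp add: ss)

lemma FA_idr: "FA I X u f J Y \<Longrightarrow> mu (f \<cdot> ide I) (ii \<cdot> X) = f"
  unfolding FA_def using mult_idr[of f] by (simp add: ss)

lemma FA_assoc: assumes "FA I X u f J Y" "FA J Y v g K Z" "FA K Z w h L W"
  shows "mu (h \<cdot> (v \<cdot> u)) (mu (g \<cdot> u) f) = mu ((mu (h \<cdot> v) g) \<cdot> u) f"
proof -
  have A: "f \<in> Ar" "g \<in> Ar" "h \<in> Ar" "u \<in> Ar" "v \<in> Ar" "w \<in> Ar"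
     "cd f = C1" "cd g = C1" "cd h = C1" "dm f = I" "dm g = J" "dm h = K" "dm u = I" "cd u = J" "dm v = J" "cd v = K"
     "d0 \<cdot> f = X" "d1 \<cdot> f = Y \<cdot> u" "d0 \<cdot> g = Y" "d1 \<cdot> g = Z \<cdot> v" "d0 \<cdot> h = Z" "d1 \<cdot> h = W \<cdot> w"
     "X \<in> Ar" "Y \<in> Ar" "Z \<in> Ar" "W \<in> Ar" "dm Y = J" "dm Z = K" "cd Y = C0" "cd Z = C0"
    using assms unfolding FA_def by auto
  have e1: "mu (h \<cdot> v) g \<cdot> u = mu ((h \<cdot> v) \<cdot> u) (g \<cdot> u)"
    by (rule mult_nat[symmetric]) (use A in \<open>simp_all add: ss\<close>)
  have e2: "mu (mu ((h \<cdot> v) \<cdot> u) (g \<cdot> u)) f = mu ((h \<cdot> v) \<cdot> u) (mu (g \<cdot> u) f)"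
    by (rule mult_assoc) (use A in \<open>simp_all add: ss\<close>)
  show ?thesis using e1 e2 A by (simp add: ss)
qed

lemma Fam_cat: "is_category FF"
  unfolding is_category_def
proof (intro conjI ballI impI)
  fix F assume "F \<in> cat_arr FF"
  then show "cat_dom FF F \<in> cat_obj FF" "cat_cod FF F \<in> cat_obj FF"
    by (auto elim!: Fam_arrE simp: Fam_obj FA_def)
next
  fix S assume "S \<in> cat_obj FF"
  then show "cat_id FF S \<in> hom FF S S"
    by (auto simp: Fam_obj hom_def intro!: Fam_arrI FA_id)
next
  fix F G assume F: "F \<in> cat_arr FF" and G: "G \<in> cat_arr FF" and e: "cat_cod FF F = cat_dom FF G"
  from F obtain I X u f J Y where F': "F = ((I,X),(u,f),(J,Y))" "FA I X u f J Y" by (rule Fam_arrE)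
  from G obtain J' Y' v g K Z where G': "G = ((J',Y'),(v,g),(K,Z))" "FA J' Y' v g K Z" by (rule Fam_arrE)
  from e F' G' have "J' = J" "Y' = Y" by simp_all
  then show "cat_comp FF G F \<in> hom FF (cat_dom FF F) (cat_cod FF G)"
    using F' G' FA_comp by (simp add: hom_def Fam_arrI)
next
  fix F assume "F \<in> cat_arr FF"
  then obtain I X u f J Y where F': "F = ((I,X),(u,f),(J,Y))" "FA I X u f J Y" by (rule Fam_arrE)
  have "ide J \<cdot> u = u" "u \<cdot> ide I = u" using F'(2) unfolding FA_def by (simp_all add: ss)
  then show "cat_comp FF (cat_id FF (cat_cod FF F)) F = F" "cat_comp FF F (cat_id FF (cat_dom FF F)) = F"
    using F' FA_idl FA_idr by simp_all
next
  fix F G H assume F: "F \<in> cat_arr FF" and G: "G \<in> cat_arr FF" and H: "H \<in> cat_arr FF"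
    and e: "cat_cod FF F = cat_dom FF G" "cat_cod FF G = cat_dom FF H"
  from F obtain I X u f J Y where F': "F = ((I,X),(u,f),(J,Y))" "FA I X u f J Y" by (rule Fam_arrE)
  from G obtain J' Y' v g K Z where G': "G = ((J',Y'),(v,g),(K,Z))" "FA J' Y' v g K Z" by (rule Fam_arrE)
  from H obtain K' Z' w h L W where H': "H = ((K',Z'),(w,h),(L,W))" "FA K' Z' w h L W" by (rule Fam_arrE)
  from e F' G' H' have "J' = J" "Y' = Y" "K' = K" "Z' = Z" by simp_all
  then have fa: "FA J Y v g K Z" "FA K Z w h L W" using G' H' by simp_all
  have "w \<cdot> (v \<cdot> u) = (w \<cdot> v) \<cdot> u" using F'(2) fa unfolding FA_def by (simp add: ss)
  then show "cat_comp FF H (cat_comp FF G F) = cat_comp FF (cat_comp FF H G) F"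
    using F' G' H' \<open>J' = J\<close> \<open>Y' = Y\<close> \<open>K' = K\<close> \<open>Z' = Z\<close> FA_assoc[OF F'(2) fa] by simp
qed


abbreviation "AA \<equiv> arrow_cat B"

lemma AA_arr: "(a,(t,b),a') \<in> cat_arr AA \<longleftrightarrow> a \<in> Ar \<and> a' \<in> Ar \<and> t \<in> Ar \<and> dm t = dm a \<and> cd t = dm a' \<and>
    b \<in> Ar \<and> dm b = cd a \<and> cd b = cd a' \<and> a' \<cdot> t = b \<cdot> a"
  unfolding arrow_cat_def hom_def by auto

lemma AA_arrE: assumes "G \<in> cat_arr AA"
  obtains a t b a' where "G = (a,(t,b),a')" "a \<in> Ar" "a' \<in> Ar" "t \<in> Ar" "dm t = dm a" "cd t = dm a'"
    "b \<in> Ar" "dm b = cd a" "cd b = cd a'" "a' \<cdot> t = b \<cdot> a"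
  using assms unfolding arrow_cat_def hom_def by auto

lemma AA_simps[simp]: "cat_obj AA = Ar" "cat_dom AA (a,x,a') = a" "cat_cod AA (a,x,a') = a'"
  "cat_id AA a = (a,(ide (dm a), ide (cd a)),a)"
  "cat_comp AA (a',(t',b'),a'') (a,(t,b),a0) = (a,(t' \<cdot> t, b' \<cdot> b),a'')"
  unfolding arrow_cat_def by simp_all

lemma AA_cat: "is_category AA"
  unfolding is_category_def
proof (intro conjI ballI impI)
  fix G assume "G \<in> cat_arr AA"
  then show "cat_dom AA G \<in> cat_obj AA" "cat_cod AA G \<in> cat_obj AA"
    by (auto elim!: AA_arrE)
next
  fix a assume "a \<in> cat_obj AA"
  then show "cat_id AA a \<in> hom AA a a"
    by (simp add: hom_def AA_arr ss)
next
  fix F G assume F: "F \<in> cat_arr AA" and G: "G \<in> cat_arr AA" and e: "cat_cod AA F = cat_dom AA G"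
  from F obtain a t b a' where F': "F = (a,(t,b),a')" "a \<in> Ar" "a' \<in> Ar" "t \<in> Ar" "dm t = dm a" "cd t = dm a'"
    "b \<in> Ar" "dm b = cd a" "cd b = cd a'" "a' \<cdot> t = b \<cdot> a" by (rule AA_arrE)
  from G obtain c t' b' c' where G': "G = (c,(t',b'),c')" "c \<in> Ar" "c' \<in> Ar" "t' \<in> Ar" "dm t' = dm c" "cd t' = dm c'"
    "b' \<in> Ar" "dm b' = cd c" "cd b' = cd c'" "c' \<cdot> t' = b' \<cdot> c" by (rule AA_arrE)
  from e F' G' have c: "c = a'" by simp
  have "c' \<cdot> (t' \<cdot> t) = (b' \<cdot> b) \<cdot> a"
  proof -
    have "c' \<cdot> (t' \<cdot> t) = (c' \<cdot> t') \<cdot> t" using F' G' c by (simp add: ss)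
    also have "\<dots> = (b' \<cdot> a') \<cdot> t" using G' c by simp
    also have "\<dots> = b' \<cdot> (a' \<cdot> t)" by (rule assoc[symmetric]) (use F' G' c in simp_all)
    also have "\<dots> = b' \<cdot> (b \<cdot> a)" using F' by simp
    also have "\<dots> = (b' \<cdot> b) \<cdot> a" using F' G' c by (simp add: ss)
    finally show ?thesis .
  qed
  then show "cat_comp AA G F \<in> hom AA (cat_dom AA F) (cat_cod AA G)"
    using F' G' c by (simp add: hom_def AA_arr ss)
next
  fix F assume "F \<in> cat_arr AA"
  then obtain a t b a' where F': "F = (a,(t,b),a')" "a \<in> Ar" "a' \<in> Ar" "t \<in> Ar" "dm t = dm a" "cd t = dm a'"
    "b \<in> Ar" "dm b = cd a" "cd b = cd a'" "a' \<cdot> t = b \<cdot> a" by (rule AA_arrE)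
  then show "cat_comp AA (cat_id AA (cat_cod AA F)) F = F" "cat_comp AA F (cat_id AA (cat_dom AA F)) = F"
    by (simp_all add: ss)
next
  fix F G H assume F: "F \<in> cat_arr AA" and G: "G \<in> cat_arr AA" and H: "H \<in> cat_arr AA"
    and e: "cat_cod AA F = cat_dom AA G" "cat_cod AA G = cat_dom AA H"
  from F obtain a t b a' where F': "F = (a,(t,b),a')" "a \<in> Ar" "a' \<in> Ar" "t \<in> Ar" "dm t = dm a" "cd t = dm a'"
    "b \<in> Ar" "dm b = cd a" "cd b = cd a'" "a' \<cdot> t = b \<cdot> a" by (rule AA_arrE)
  from G obtain c t' b' c' where G': "G = (c,(t',b'),c')" "c \<in> Ar" "c' \<in> Ar" "t' \<in> Ar" "dm t' = dm c" "cd t' = dm c'"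
    "b' \<in> Ar" "dm b' = cd c" "cd b' = cd c'" "c' \<cdot> t' = b' \<cdot> c" by (rule AA_arrE)
  from H obtain d t'' b'' d' where H': "H = (d,(t'',b''),d')" "d \<in> Ar" "d' \<in> Ar" "t'' \<in> Ar" "dm t'' = dm d" "cd t'' = dm d'"
    "b'' \<in> Ar" "dm b'' = cd d" "cd b'' = cd d'" "d' \<cdot> t'' = b'' \<cdot> d" by (rule AA_arrE)
  from e F' G' H' have "c = a'" "d = c'" by simp_all
  then show "cat_comp AA H (cat_comp AA G F) = cat_comp AA (cat_comp AA H G) F"
    using F' G' H' by (simp add: ss)
qed

lemma proj_simps[simp]: "proj_obj (I,X) = I" "proj_arr (S,(u,f),T) = u"
  by (simp_all add: proj_obj_def proj_arr_def)

lemma proj_functor: "is_functor FF B proj_obj proj_arr"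
  unfolding is_functor_def
proof (intro conjI ballI impI)
  show "is_category FF" by (rule Fam_cat)
  show "is_category B" by (rule cat)
next
  fix S assume "S \<in> cat_obj FF" then show "proj_obj S \<in> Ob" by (auto simp: Fam_obj)
next
  fix F assume "F \<in> cat_arr FF" then show "proj_arr F \<in> Hom (proj_obj (cat_dom FF F)) (proj_obj (cat_cod FF F))"
    by (auto elim!: Fam_arrE simp: FA_def hom_def)
next
  fix S assume "S \<in> cat_obj FF" then show "proj_arr (cat_id FF S) = ide (proj_obj S)" by (auto simp: Fam_obj)
next
  fix F G assume F: "F \<in> cat_arr FF" and G: "G \<in> cat_arr FF" and e: "cat_cod FF F = cat_dom FF G"
  from F obtain I X u f J Y where F': "F = ((I,X),(u,f),(J,Y))" "FA I X u f J Y" by (rule Fam_arrE)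
  from G obtain J' Y' v g K Z where G': "G = ((J',Y'),(v,g),(K,Z))" "FA J' Y' v g K Z" by (rule Fam_arrE)
  show "proj_arr (cat_comp FF G F) = proj_arr G \<cdot> proj_arr F" using F' G' by simp
qed

lemma cartD: "is_cartesian A B' Po Pm f \<Longrightarrow> g \<in> cat_arr A \<Longrightarrow> cat_cod A g = cat_cod A f \<Longrightarrow>
   w \<in> hom B' (Po (cat_dom A g)) (Po (cat_dom A f)) \<Longrightarrow> cat_comp B' (Pm f) w = Pm g \<Longrightarrow>
   (\<exists>!h. h \<in> hom A (cat_dom A g) (cat_dom A f) \<and> Pm h = w \<and> cat_comp A f h = g)"
  unfolding is_cartesian_def by blast

lemma Fam_hom: "H \<in> hom FF (K,Z) (I,X') \<longleftrightarrow> (\<exists>w h. H = ((K,Z),(w,h),(I,X')) \<and> FA K Z w h I X')"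
  unfolding hom_def using Fam_arr by auto

lemma lift_cart: assumes Y: "Y \<in> Ar" "dm Y = J" "cd Y = C0" and u: "u \<in> Ar" "cd u = J"
  shows "is_cartesian FF B proj_obj proj_arr ((dm u, Y \<cdot> u),(u, ii \<cdot> (Y \<cdot> u)),(J,Y))"
    (is "is_cartesian _ _ _ _ ?L")
proof -
  let ?I = "dm u"
  have FL: "FA ?I (Y \<cdot> u) u (ii \<cdot> (Y \<cdot> u)) J Y" unfolding FA_def using Y u dom_obj[OF Y(1)] by (simp add: ss)
  show ?thesis unfolding is_cartesian_def
  proof (intro conjI ballI impI)
    show "?L \<in> cat_arr FF" using FL by (rule Fam_arrI)
  next
    fix G w assume G: "G \<in> cat_arr FF" and e: "cat_cod FF G = cat_cod FF ?L"
      and w: "w \<in> Hom (proj_obj (cat_dom FF G)) (proj_obj (cat_dom FF ?L))"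
      and ew: "proj_arr ?L \<cdot> w = proj_arr G"
    from G obtain K Z v g J' Y' where G': "G = ((K,Z),(v,g),(J',Y'))" "FA K Z v g J' Y'" by (rule Fam_arrE)
    from e G' have "J' = J" "Y' = Y" by simp_all
    with G' have FG: "FA K Z v g J Y" by simp
    from w G' have w': "w \<in> Ar" "dm w = K" "cd w = ?I" by (simp_all add: hom_def)
    from ew G' have uw: "u \<cdot> w = v" by simp
    have d1g: "d1 \<cdot> g = (Y \<cdot> u) \<cdot> w"
    proof -
      have "d1 \<cdot> g = Y \<cdot> v" using FG unfolding FA_def by simp
      also have "\<dots> = Y \<cdot> (u \<cdot> w)" using uw by simp
      also have "\<dots> = (Y \<cdot> u) \<cdot> w" using Y u w' by (simp add: ss)
      finally show ?thesis .
    qed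
    have FH: "FA K Z w g ?I (Y \<cdot> u)" using FG w' Y u d1g unfolding FA_def by (simp add: ss)
    have key: "\<And>h. FA K Z w h ?I (Y \<cdot> u) \<Longrightarrow> mu ((ii \<cdot> (Y \<cdot> u)) \<cdot> w) h = h"
    proof -
      fix h assume "FA K Z w h ?I (Y \<cdot> u)"
      then have h: "h \<in> Ar" "cd h = C1" "d1 \<cdot> h = (Y \<cdot> u) \<cdot> w" unfolding FA_def by simp_all
      have "(ii \<cdot> (Y \<cdot> u)) \<cdot> w = ii \<cdot> (d1 \<cdot> h)" using h Y u w' by (simp add: ss)
      then show "mu ((ii \<cdot> (Y \<cdot> u)) \<cdot> w) h = h" using mult_idl[OF h(1,2)] by simp
    qed
    let ?H = "((K,Z),(w,g),(?I,Y \<cdot> u))"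
    show "\<exists>!H. H \<in> hom FF (cat_dom FF G) (cat_dom FF ?L) \<and> proj_arr H = w \<and> cat_comp FF ?L H = G"
    proof (rule ex1I[of _ ?H])
      show "?H \<in> hom FF (cat_dom FF G) (cat_dom FF ?L) \<and> proj_arr ?H = w \<and> cat_comp FF ?L ?H = G"
        using FH key[OF FH] G' uw \<open>J' = J\<close> \<open>Y' = Y\<close> by (simp add: Fam_hom)
    next
      fix H assume "H \<in> hom FF (cat_dom FF G) (cat_dom FF ?L) \<and> proj_arr H = w \<and> cat_comp FF ?L H = G"
      then obtain w' h where H: "H = ((K,Z),(w',h),(?I,Y \<cdot> u))" "FA K Z w' h ?I (Y \<cdot> u)"
        "w' = w" "cat_comp FF ?L H = G" using G' by (auto simp: Fam_hom)
      then have "h = g" using key[of h] G' by simp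
      then show "H = ?H" using H by simp
    qed
  qed
qed

lemma proj_fib: "is_fibration FF B proj_obj proj_arr"
  unfolding is_fibration_def
proof (intro conjI ballI impI)
  show "is_functor FF B proj_obj proj_arr" by (rule proj_functor)
  fix S u assume S: "S \<in> cat_obj FF" and u: "u \<in> Ar" and e: "cd u = proj_obj S"
  from S obtain J Y where S': "S = (J,Y)" "J \<in> Ob" "Y \<in> Ar" "dm Y = J" "cd Y = C0" by (auto simp: Fam_obj)
  let ?L = "((dm u, Y \<cdot> u),(u, ii \<cdot> (Y \<cdot> u)),(J,Y))"
  have FL: "FA (dm u) (Y \<cdot> u) u (ii \<cdot> (Y \<cdot> u)) J Y" unfolding FA_def using S' u e by (simp add: ss)
  show "\<exists>f\<in>cat_arr FF. cat_cod FF f = S \<and> proj_arr f = u \<and> is_cartesian FF B proj_obj proj_arr f"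
  proof (rule bexI[of _ ?L])
    show "?L \<in> cat_arr FF" using FL by (rule Fam_arrI)
    show "cat_cod FF ?L = S \<and> proj_arr ?L = u \<and> is_cartesian FF B proj_obj proj_arr ?L"
      using lift_cart[OF S'(3,4,5) u] S' e by simp
  qed
qed


lemma pb_facts: "is_pullback B f g p q \<Longrightarrow> p \<in> Ar \<and> q \<in> Ar \<and> dm q = dm p \<and> cd p = dm f \<and> cd q = dm g \<and> f \<cdot> p = g \<cdot> q"
  unfolding is_pullback_def by auto

lemma pb_ex1: "is_pullback B f g p q \<Longrightarrow> a \<in> Ar \<Longrightarrow> b \<in> Ar \<Longrightarrow> dm a = dm b \<Longrightarrow> cd a = dm f \<Longrightarrow>
   cd b = dm g \<Longrightarrow> f \<cdot> a = g \<cdot> b \<Longrightarrow> \<exists>!h. h \<in> Hom (dm a) (dm p) \<and> p \<cdot> h = a \<and> q \<cdot> h = b"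
  unfolding is_pullback_def by blast

lemma pb_uniq: assumes P: "is_pullback B f g p q" and h: "h \<in> Ar" "h' \<in> Ar" "dm h = dm h'" "cd h = dm p" "cd h' = dm p"
  and e: "p \<cdot> h = p \<cdot> h'" "q \<cdot> h = q \<cdot> h'" shows "h = h'"
proof -
  note F = pb_facts[OF P]
  have f: "f \<in> Ar" "g \<in> Ar" using P unfolding is_pullback_def by auto
  have "f \<cdot> (p \<cdot> h) = g \<cdot> (q \<cdot> h)"
  proof -
    have "f \<cdot> (p \<cdot> h) = (f \<cdot> p) \<cdot> h" using F f h by (simp add: assoc)
    also have "\<dots> = (g \<cdot> q) \<cdot> h" using F by simp
    also have "\<dots> = g \<cdot> (q \<cdot> h)" by (rule assoc[symmetric]) (use F f h in simp_all)
    finally show ?thesis .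
  qed
  note eq = this
  have E: "\<exists>!k. k \<in> Hom (dm (p \<cdot> h)) (dm p) \<and> p \<cdot> k = p \<cdot> h \<and> q \<cdot> k = q \<cdot> h"
    by (rule pb_ex1[OF P]) (use F f h eq in \<open>simp_all add: cs\<close>)
  have "h \<in> Hom (dm (p \<cdot> h)) (dm p)" "h' \<in> Hom (dm (p \<cdot> h)) (dm p)" using F h by (simp_all add: hom_def cs)
  moreover have "p \<cdot> h' = p \<cdot> h" "q \<cdot> h' = q \<cdot> h" using e by simp_all
  ultimately show ?thesis using E unfolding Ex1_def by metis
qed

definition med where "med p q a b = (THE h. h \<in> Hom (dm a) (dm p) \<and> p \<cdot> h = a \<and> q \<cdot> h = b)"

lemma med: assumes "is_pullback B f g p q" "a \<in> Ar" "b \<in> Ar" "dm a = dm b" "cd a = dm f" "cd b = dm g" "f \<cdot> a = g \<cdot> b"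
  shows "med p q a b \<in> Ar" "dm (med p q a b) = dm a" "cd (med p q a b) = dm p"
     "p \<cdot> med p q a b = a" "q \<cdot> med p q a b = b"
  using theI'[OF pb_ex1[OF assms]] unfolding med_def hom_def by simp_all

definition PB where "PB X = (SOME pq. is_pullback B X d1 (fst pq) (snd pq))"
definition pp where "pp X = fst (PB X)"
definition qq where "qq X = snd (PB X)"

lemma PB: assumes "X \<in> Ar" "cd X = C0" shows "is_pullback B X d1 (pp X) (qq X)"
proof -
  have "\<exists>p q. is_pullback B X d1 p q" using lim assms ics unfolding has_finite_limits_def by auto
  then have "\<exists>pq. is_pullback B X d1 (fst pq) (snd pq)" by auto
  from someI_ex[OF this] show ?thesis unfolding pp_def qq_def PB_def .
qed

lemma PBs: assumes "X \<in> Ar" "cd X = C0" shows "pp X \<in> Ar" "qq X \<in> Ar" "dm (qq X) = dm (pp X)"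
  "cd (pp X) = dm X" "cd (qq X) = C1" "X \<cdot> pp X = d1 \<cdot> qq X"
  using pb_facts[OF PB[OF assms]] ics by auto

definition tm where "tm X Y u f = med (pp Y) (qq Y) (u \<cdot> pp X) (mu (f \<cdot> pp X) (qq X))"

lemma tm: assumes F: "FA I X u f J Y"
  shows "tm X Y u f \<in> Ar" "dm (tm X Y u f) = dm (pp X)" "cd (tm X Y u f) = dm (pp Y)"
    "pp Y \<cdot> tm X Y u f = u \<cdot> pp X" "qq Y \<cdot> tm X Y u f = mu (f \<cdot> pp X) (qq X)"
proof -
  have A: "f \<in> Ar" "u \<in> Ar" "cd f = C1" "dm f = I" "dm u = I" "cd u = J"
     "d0 \<cdot> f = X" "d1 \<cdot> f = Y \<cdot> u" "X \<in> Ar" "Y \<in> Ar" "dm X = I" "dm Y = J" "cd Y = C0" "cd X = C0"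
    using F unfolding FA_def by auto
  note PX = PBs[OF A(9,14)] and PY = PBs[OF A(10,13)]
  have m: "d0 \<cdot> (f \<cdot> pp X) = d1 \<cdot> qq X"
  proof -
    have "d0 \<cdot> (f \<cdot> pp X) = (d0 \<cdot> f) \<cdot> pp X" using A PX by (simp add: ss)
    then show ?thesis using A PX by simp
  qed
  note M = mult[of "f \<cdot> pp X" "qq X", OF _ _ PX(2) PX(5) _ m]
  have M': "mu (f \<cdot> pp X) (qq X) \<in> Ar" "dm (mu (f \<cdot> pp X) (qq X)) = dm (pp X)"
      "cd (mu (f \<cdot> pp X) (qq X)) = C1" "d1 \<cdot> mu (f \<cdot> pp X) (qq X) = d1 \<cdot> (f \<cdot> pp X)"
    using M A PX by (simp_all add: cs)
  have e: "Y \<cdot> (u \<cdot> pp X) = d1 \<cdot> mu (f \<cdot> pp X) (qq X)"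
  proof -
    have "Y \<cdot> (u \<cdot> pp X) = (Y \<cdot> u) \<cdot> pp X" using A PX by (simp add: assoc)
    also have "\<dots> = (d1 \<cdot> f) \<cdot> pp X" using A by simp
    also have "\<dots> = d1 \<cdot> (f \<cdot> pp X)" by (rule assoc[symmetric]) (use A PX ics in simp_all)
    finally show ?thesis using M' by simp
  qed
  note MD = med[OF PB[OF A(10,13)], of "u \<cdot> pp X" "mu (f \<cdot> pp X) (qq X)"]
  show "tm X Y u f \<in> Ar" "dm (tm X Y u f) = dm (pp X)" "cd (tm X Y u f) = dm (pp Y)"
    "pp Y \<cdot> tm X Y u f = u \<cdot> pp X" "qq Y \<cdot> tm X Y u f = mu (f \<cdot> pp X) (qq X)"
    unfolding tm_def using MD M' A PX PY e ics by (simp_all add: cs)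
qed


lemma FAD: assumes "FA I X u f J Y" shows "I \<in> Ob" "J \<in> Ob" "f \<in> Ar" "u \<in> Ar" "cd f = C1" "dm f = I" "dm u = I" "cd u = J"
     "d0 \<cdot> f = X" "d1 \<cdot> f = Y \<cdot> u" "X \<in> Ar" "Y \<in> Ar" "dm X = I" "dm Y = J" "cd Y = C0" "cd X = C0"
  using assms unfolding FA_def by auto

lemma tm_id: assumes "X \<in> Ar" "cd X = C0" "dm X = I"
  shows "tm X X (ide I) (ii \<cdot> X) = ide (dm (pp X))"
proof -
  have I: "I \<in> Ob" using dom_obj[OF assms(1)] assms by simp
  have F: "FA I X (ide I) (ii \<cdot> X) I X" using FA_id[OF I assms(1) assms(3) assms(2)] .
  note T = tm[OF F] and PX = PBs[OF assms(1,2)]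
  have o: "dm (pp X) \<in> Ob" using dom_obj PX by blast
  have e1: "(ii \<cdot> X) \<cdot> pp X = ii \<cdot> (d1 \<cdot> qq X)"
  proof -
    have "(ii \<cdot> X) \<cdot> pp X = ii \<cdot> (X \<cdot> pp X)" by (rule assoc[symmetric]) (use assms PX ics in simp_all)
    then show ?thesis using PX by simp
  qed
  show ?thesis
  proof (rule pb_uniq[OF PB[OF assms(1,2)]])
    show "pp X \<cdot> tm X X (ide I) (ii \<cdot> X) = pp X \<cdot> ide (dm (pp X))"
      using T PX assms o by (simp add: cs)
    show "qq X \<cdot> tm X X (ide I) (ii \<cdot> X) = qq X \<cdot> ide (dm (pp X))"
      using T PX assms o e1 mult_idl[OF PX(2) PX(5)] by (simp add: cs)
  qed (use T PX assms o in \<open>simp_all add: cs\<close>)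
qed

lemma tm_comp: assumes F: "FA I X u f J Y" and G: "FA J Y v g K Z"
  shows "tm X Z (v \<cdot> u) (mu (g \<cdot> u) f) = tm Y Z v g \<cdot> tm X Y u f"
proof -
  note A = FAD[OF F] and B = FAD[OF G]
  note GF = FA_comp[OF F G]
  note T1 = tm[OF F] and T2 = tm[OF G] and T3 = tm[OF GF]
  note PX = PBs[OF A(11,16)] and PY = PBs[OF A(12,15)] and PZ = PBs[OF B(12,15)]
  have a1: "pp Z \<cdot> (tm Y Z v g \<cdot> tm X Y u f) = (v \<cdot> u) \<cdot> pp X"
  proof -
    have "pp Z \<cdot> (tm Y Z v g \<cdot> tm X Y u f) = (pp Z \<cdot> tm Y Z v g) \<cdot> tm X Y u f"
      using T1 T2 PZ PY by (simp add: assoc)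
    also have "\<dots> = (v \<cdot> pp Y) \<cdot> tm X Y u f" using T2 by simp
    also have "\<dots> = v \<cdot> (pp Y \<cdot> tm X Y u f)" by (rule assoc[symmetric]) (use T1 PY A B in simp_all)
    also have "\<dots> = v \<cdot> (u \<cdot> pp X)" using T1 by simp
    also have "\<dots> = (v \<cdot> u) \<cdot> pp X" by (rule assoc) (use PX A B in simp_all)
    finally show ?thesis .
  qed
  have gu: "g \<cdot> u \<in> Ar" "cd (g \<cdot> u) = C1" "dm (g \<cdot> u) = I" "d0 \<cdot> (g \<cdot> u) = d1 \<cdot> f"
    using A B by (simp_all add: ss)
  have m2: "d0 \<cdot> (g \<cdot> pp Y) = d1 \<cdot> qq Y" using B PY by (simp add: ss)
  have m1: "d0 \<cdot> (f \<cdot> pp X) = d1 \<cdot> qq X" using A PX by (simp add: ss)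
  have a2: "qq Z \<cdot> (tm Y Z v g \<cdot> tm X Y u f) = mu (mu (g \<cdot> u) f \<cdot> pp X) (qq X)"
  proof -
    have "qq Z \<cdot> (tm Y Z v g \<cdot> tm X Y u f) = (qq Z \<cdot> tm Y Z v g) \<cdot> tm X Y u f"
      using T1 T2 PZ PY by (simp add: assoc)
    also have "\<dots> = mu (g \<cdot> pp Y) (qq Y) \<cdot> tm X Y u f" using T2 by simp
    also have "\<dots> = mu ((g \<cdot> pp Y) \<cdot> tm X Y u f) (qq Y \<cdot> tm X Y u f)"
      by (rule mult_nat[symmetric]) (use B PY T1 m2 in \<open>simp_all add: cs\<close>)
    also have "(g \<cdot> pp Y) \<cdot> tm X Y u f = (g \<cdot> u) \<cdot> pp X"
    proof -
      have "(g \<cdot> pp Y) \<cdot> tm X Y u f = g \<cdot> (pp Y \<cdot> tm X Y u f)" by (rule assoc[symmetric]) (use B PY T1 in simp_all)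
      also have "\<dots> = g \<cdot> (u \<cdot> pp X)" using T1 by simp
      also have "\<dots> = (g \<cdot> u) \<cdot> pp X" by (rule assoc) (use A B PX in simp_all)
      finally show ?thesis .
    qed
    also have "qq Y \<cdot> tm X Y u f = mu (f \<cdot> pp X) (qq X)" using T1 by simp
    also have "mu ((g \<cdot> u) \<cdot> pp X) (mu (f \<cdot> pp X) (qq X)) = mu (mu ((g \<cdot> u) \<cdot> pp X) (f \<cdot> pp X)) (qq X)"
      by (rule mult_assoc[symmetric]) (use A B PX m1 gu in \<open>simp_all add: ss\<close>)
    also have "mu ((g \<cdot> u) \<cdot> pp X) (f \<cdot> pp X) = mu (g \<cdot> u) f \<cdot> pp X"
      by (rule mult_nat) (use A PX gu in simp_all)
    finally show ?thesis .
  qed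
  show ?thesis
  proof (rule pb_uniq[OF PB[OF B(12,15)]])
    show "pp Z \<cdot> tm X Z (v \<cdot> u) (mu (g \<cdot> u) f) = pp Z \<cdot> (tm Y Z v g \<cdot> tm X Y u f)" using a1 T3 by simp
    show "qq Z \<cdot> tm X Z (v \<cdot> u) (mu (g \<cdot> u) f) = qq Z \<cdot> (tm Y Z v g \<cdot> tm X Y u f)" using a2 T3 by simp
  qed (use T1 T2 T3 in \<open>simp_all add: cs\<close>)
qed


lemma tm_sec: assumes F: "FA I X u f J Y"
  shows "(qq Y \<cdot> tm X Y u f) \<cdot> med (pp X) (qq X) (ide I) (ii \<cdot> X) = f"
proof -
  note A = FAD[OF F] and T = tm[OF F]
  note P = PB[OF A(11,16)] and PX = PBs[OF A(11,16)]
  have e: "X \<cdot> ide I = d1 \<cdot> (ii \<cdot> X)"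
  proof -
    have "d1 \<cdot> (ii \<cdot> X) = (d1 \<cdot> ii) \<cdot> X" by (rule assoc) (use A ics in simp_all)
    then show ?thesis using A ics iceq by (simp add: cs)
  qed
  note M = med[OF P, of "ide I" "ii \<cdot> X"]
  have M': "med (pp X) (qq X) (ide I) (ii \<cdot> X) \<in> Ar" "dm (med (pp X) (qq X) (ide I) (ii \<cdot> X)) = I"
    "cd (med (pp X) (qq X) (ide I) (ii \<cdot> X)) = dm (pp X)"
    "pp X \<cdot> med (pp X) (qq X) (ide I) (ii \<cdot> X) = ide I" "qq X \<cdot> med (pp X) (qq X) (ide I) (ii \<cdot> X) = ii \<cdot> X"
    using M A ics e by (simp_all add: cs)
  let ?s = "med (pp X) (qq X) (ide I) (ii \<cdot> X)"
  have m1: "d0 \<cdot> (f \<cdot> pp X) = d1 \<cdot> qq X" using A PX by (simp add: ss)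
  have "(qq Y \<cdot> tm X Y u f) \<cdot> ?s = mu (f \<cdot> pp X) (qq X) \<cdot> ?s" using T by simp
  also have "\<dots> = mu ((f \<cdot> pp X) \<cdot> ?s) (qq X \<cdot> ?s)"
    by (rule mult_nat[symmetric]) (use A PX M' m1 in \<open>simp_all add: cs\<close>)
  also have "(f \<cdot> pp X) \<cdot> ?s = f \<cdot> ide I"
  proof -
    have "(f \<cdot> pp X) \<cdot> ?s = f \<cdot> (pp X \<cdot> ?s)" by (rule assoc[symmetric]) (use A PX M' in simp_all)
    then show ?thesis using M' by simp
  qed
  also have "mu (f \<cdot> ide I) (qq X \<cdot> ?s) = f" using M' FA_idr[OF F] by simp
  finally show ?thesis .
qed

definition Uo where "Uo S = pp (snd S)"
definition Um where "Um F = (case F of (S,(u,f),T) \<Rightarrow> (pp (snd S), (tm (snd S) (snd T) u f, u), pp (snd T)))"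

lemma Um_simp[simp]: "Um ((I,X),(u,f),(J,Y)) = (pp X, (tm X Y u f, u), pp Y)"
  unfolding Um_def by simp

lemma Um_arr: assumes F: "FA I X u f J Y" shows "(pp X, (tm X Y u f, u), pp Y) \<in> hom AA (pp X) (pp Y)"
proof -
  note A = FAD[OF F] and T = tm[OF F]
  note PX = PBs[OF A(11,16)] and PY = PBs[OF A(12,15)]
  have "(pp X, (tm X Y u f, u), pp Y) \<in> cat_arr AA"
    unfolding AA_arr using A T PX PY by (intro conjI) simp_all
  then show ?thesis unfolding hom_def by simp
qed

lemma U_functor: "is_functor FF AA Uo Um"
  unfolding is_functor_def
proof (intro conjI ballI impI)
  show "is_category FF" by (rule Fam_cat)
  show "is_category AA" by (rule AA_cat)
next
  fix S assume "S \<in> cat_obj FF" then show "Uo S \<in> cat_obj AA"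
    by (auto simp: Fam_obj Uo_def dest: PBs)
next
  fix F assume "F \<in> cat_arr FF" then show "Um F \<in> hom AA (Uo (cat_dom FF F)) (Uo (cat_cod FF F))"
    by (auto elim!: Fam_arrE simp: Uo_def Um_arr)
next
  fix S assume "S \<in> cat_obj FF"
  then obtain I X where S: "S = (I,X)" "I \<in> Ob" "X \<in> Ar" "dm X = I" "cd X = C0" by (auto simp: Fam_obj)
  note PX = PBs[OF S(3,5)]
  show "Um (cat_id FF S) = cat_id AA (Uo S)" using S tm_id[OF S(3,5,4)] PX by (simp add: Uo_def)
next
  fix F G assume F: "F \<in> cat_arr FF" and G: "G \<in> cat_arr FF" and e: "cat_cod FF F = cat_dom FF G"
  from F obtain I X u f J Y where F': "F = ((I,X),(u,f),(J,Y))" "FA I X u f J Y" by (rule Fam_arrE)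
  from G obtain J' Y' v g K Z where G': "G = ((J',Y'),(v,g),(K,Z))" "FA J' Y' v g K Z" by (rule Fam_arrE)
  from e F' G' have "J' = J" "Y' = Y" by simp_all
  then have G'': "FA J Y v g K Z" using G' by simp
  show "Um (cat_comp FF G F) = cat_comp AA (Um G) (Um F)"
    using F' G' \<open>J' = J\<close> \<open>Y' = Y\<close> tm_comp[OF F'(2) G''] by simp
qed

lemma U_faithful: "faithful FF Um"
  unfolding faithful_def
proof (intro ballI impI)
  fix F F' assume F: "F \<in> cat_arr FF" and F2: "F' \<in> cat_arr FF"
    and e: "cat_dom FF F = cat_dom FF F'" "cat_cod FF F = cat_cod FF F'" "Um F = Um F'"
  from F obtain I X u f J Y where F1: "F = ((I,X),(u,f),(J,Y))" "FA I X u f J Y" by (rule Fam_arrE)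
  from F2 obtain I' X' u' f' J' Y' where F1': "F' = ((I',X'),(u',f'),(J',Y'))" "FA I' X' u' f' J' Y'" by (rule Fam_arrE)
  from e F1 F1' have eq: "I' = I" "X' = X" "J' = J" "Y' = Y" "u' = u" by simp_all
  have "(pp X, (tm X Y u f, u), pp Y) = (pp X', (tm X' Y' u' f', u'), pp Y')" using e(3) F1 F1' by (simp only: Um_simp)
  then have "fst (fst (snd (pp X, (tm X Y u f, u), pp Y))) = fst (fst (snd (pp X', (tm X' Y' u' f', u'), pp Y')))"
    by (rule arg_cong)
  then have "tm X Y u f = tm X' Y' u' f'" by (simp only: fst_conv snd_conv)
  then have et: "tm X Y u f = tm X Y u f'" using eq by simp
  have FA2: "FA I X u f' J Y" using F1' eq by simp
  have "f = (qq Y \<cdot> tm X Y u f) \<cdot> med (pp X) (qq X) (ide I) (ii \<cdot> X)" using tm_sec[OF F1(2)] by (rule sym)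
  also have "\<dots> = (qq Y \<cdot> tm X Y u f') \<cdot> med (pp X) (qq X) (ide I) (ii \<cdot> X)" by (simp only: et)
  also have "\<dots> = f'" by (rule tm_sec[OF FA2])
  finally have "f = f'" .
  then show "F = F'" using F1 F1' eq by simp
qed


lemma tm_s: assumes F: "FA I X u f J Y" and s: "s \<in> Ar" "cd s = dm (pp X)"
  shows "pp Y \<cdot> (tm X Y u f \<cdot> s) = u \<cdot> (pp X \<cdot> s)"
    "qq Y \<cdot> (tm X Y u f \<cdot> s) = mu (f \<cdot> (pp X \<cdot> s)) (qq X \<cdot> s)"
    "tm X Y u f \<cdot> s \<in> Ar" "dm (tm X Y u f \<cdot> s) = dm s" "cd (tm X Y u f \<cdot> s) = dm (pp Y)"
proof -
  note A = FAD[OF F] and T = tm[OF F]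
  note PX = PBs[OF A(11,16)] and PY = PBs[OF A(12,15)]
  show "tm X Y u f \<cdot> s \<in> Ar" "dm (tm X Y u f \<cdot> s) = dm s" "cd (tm X Y u f \<cdot> s) = dm (pp Y)"
    using T s by (simp_all add: cs)
  have "pp Y \<cdot> (tm X Y u f \<cdot> s) = (pp Y \<cdot> tm X Y u f) \<cdot> s" by (rule assoc) (use T s PY in simp_all)
  also have "\<dots> = (u \<cdot> pp X) \<cdot> s" using T by simp
  also have "\<dots> = u \<cdot> (pp X \<cdot> s)" by (rule assoc[symmetric]) (use A s PX in simp_all)
  finally show "pp Y \<cdot> (tm X Y u f \<cdot> s) = u \<cdot> (pp X \<cdot> s)" .
  have m1: "d0 \<cdot> (f \<cdot> pp X) = d1 \<cdot> qq X" using A PX by (simp add: ss)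
  have "qq Y \<cdot> (tm X Y u f \<cdot> s) = (qq Y \<cdot> tm X Y u f) \<cdot> s" by (rule assoc) (use T s PY in simp_all)
  also have "\<dots> = mu (f \<cdot> pp X) (qq X) \<cdot> s" using T by simp
  also have "\<dots> = mu ((f \<cdot> pp X) \<cdot> s) (qq X \<cdot> s)"
    by (rule mult_nat[symmetric]) (use A PX s m1 in \<open>simp_all add: cs\<close>)
  also have "(f \<cdot> pp X) \<cdot> s = f \<cdot> (pp X \<cdot> s)" by (rule assoc[symmetric]) (use A s PX in simp_all)
  finally show "qq Y \<cdot> (tm X Y u f \<cdot> s) = mu (f \<cdot> (pp X \<cdot> s)) (qq X \<cdot> s)" .
qed

lemma cart_inv: assumes F: "FA I X u f J Y" and cart: "is_cartesian FF B proj_obj proj_arr ((I,X),(u,f),(J,Y))"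
  shows "\<exists>f'. FA I (Y \<cdot> u) (ide I) f' I X \<and> mu f f' = ii \<cdot> (Y \<cdot> u) \<and> mu f' f = ii \<cdot> X"
proof -
  note A = FAD[OF F]
  let ?L = "((I,Y \<cdot> u),(u, ii \<cdot> (Y \<cdot> u)),(J,Y))"
  have FL: "FA I (Y \<cdot> u) u (ii \<cdot> (Y \<cdot> u)) J Y" unfolding FA_def using A by (simp add: ss)
  have idI: "ide I \<in> Hom I I" using A by (simp add: hom_def cs)
  have uid: "u \<cdot> ide I = u" "f \<cdot> ide I = f" using A by (simp_all add: cs)
  have "\<exists>!H. H \<in> hom FF (I,Y \<cdot> u) (I,X) \<and> proj_arr H = ide I \<and> cat_comp FF ((I,X),(u,f),(J,Y)) H = ?L"
    using cartD[OF cart Fam_arrI[OF FL], of "ide I"] idI uid by simp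
  then obtain H where H: "H \<in> hom FF (I,Y \<cdot> u) (I,X)" "proj_arr H = ide I"
     "cat_comp FF ((I,X),(u,f),(J,Y)) H = ?L" by blast
  then obtain w f' where H': "H = ((I,Y \<cdot> u),(w,f'),(I,X))" "FA I (Y \<cdot> u) w f' I X" by (auto simp: Fam_hom)
  with H have w: "w = ide I" by simp
  with H' have FH: "FA I (Y \<cdot> u) (ide I) f' I X" by simp
  from H(3) H' w uid have ff': "mu f f' = ii \<cdot> (Y \<cdot> u)" by simp
  note B = FAD[OF FH]
  have mc: "d0 \<cdot> f' = d1 \<cdot> f" using A B by simp
  note M = mult[OF B(3,5) A(3,5) _ mc]
  have FH1: "FA I X (ide I) (mu f' f) I X" using M A B unfolding FA_def by simp
  have mc2: "d0 \<cdot> f = d1 \<cdot> f'" using A B by (simp add: cs)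
  have c1: "mu f (mu f' f) = f"
  proof -
    have "mu f (mu f' f) = mu (mu f f') f" by (rule mult_assoc[symmetric]) (use A B mc mc2 in simp_all)
    also have "\<dots> = mu (ii \<cdot> (d1 \<cdot> f)) f" using ff' A by simp
    also have "\<dots> = f" by (rule mult_idl) (use A in simp_all)
    finally show ?thesis .
  qed
  have "\<exists>!H. H \<in> hom FF (I,X) (I,X) \<and> proj_arr H = ide I \<and> cat_comp FF ((I,X),(u,f),(J,Y)) H = ((I,X),(u,f),(J,Y))"
    using cartD[OF cart Fam_arrI[OF F], of "ide I"] idI uid by simp
  moreover have "((I,X),(ide I, mu f' f),(I,X)) \<in> hom FF (I,X) (I,X) \<and> proj_arr ((I,X),(ide I, mu f' f),(I,X)) = ide I \<and>
     cat_comp FF ((I,X),(u,f),(J,Y)) ((I,X),(ide I, mu f' f),(I,X)) = ((I,X),(u,f),(J,Y))"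
    using FH1 c1 uid by (simp add: Fam_hom)
  moreover have "((I,X),(ide I, ii \<cdot> X),(I,X)) \<in> hom FF (I,X) (I,X) \<and> proj_arr ((I,X),(ide I, ii \<cdot> X),(I,X)) = ide I \<and>
     cat_comp FF ((I,X),(u,f),(J,Y)) ((I,X),(ide I, ii \<cdot> X),(I,X)) = ((I,X),(u,f),(J,Y))"
    using FA_id[OF A(1) A(11) A(13) A(16)] FA_idr[OF F] uid by (simp add: Fam_hom)
  ultimately have "((I,X),(ide I, mu f' f),(I,X)) = ((I,X),(ide I, ii \<cdot> X),(I,X))"
    unfolding Ex1_def by blast
  then have "mu f' f = ii \<cdot> X" by simp
  then show ?thesis using FH ff' by blast
qed


lemma cod_simps[simp]: "cod_obj B a = cd a" "cod_arr (a,(t,b),a') = b"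
  by (simp_all add: cod_obj_def cod_arr_def)

lemma Um_cart: assumes F: "FA I X u f J Y" and cart: "is_cartesian FF B proj_obj proj_arr ((I,X),(u,f),(J,Y))"
  shows "is_cartesian AA B (cod_obj B) cod_arr (pp X, (tm X Y u f, u), pp Y)"
proof -
  note A = FAD[OF F] and T = tm[OF F]
  note PX = PBs[OF A(11,16)] and PY = PBs[OF A(12,15)]
  obtain f' where f': "FA I (Y \<cdot> u) (ide I) f' I X" "mu f f' = ii \<cdot> (Y \<cdot> u)" "mu f' f = ii \<cdot> X"
    using cart_inv[OF F cart] by blast
  note B = FAD[OF f'(1)]
  have d1f': "d1 \<cdot> f' = X" using B by (simp add: cs)
  show ?thesis unfolding is_cartesian_def
  proof (intro conjI ballI impI)
    show "(pp X, (tm X Y u f, u), pp Y) \<in> cat_arr AA" using Um_arr[OF F] by (simp add: hom_def)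
  next
    fix G w assume G: "G \<in> cat_arr AA" and eG: "cat_cod AA G = cat_cod AA (pp X, (tm X Y u f, u), pp Y)"
      and w: "w \<in> Hom (cod_obj B (cat_dom AA G)) (cod_obj B (cat_dom AA (pp X, (tm X Y u f, u), pp Y)))"
      and ew: "cat_comp B (cod_arr (pp X, (tm X Y u f, u), pp Y)) w = cod_arr G"
    from G obtain a t2 b a' where G': "G = (a,(t2,b),a')" "a \<in> Ar" "a' \<in> Ar" "t2 \<in> Ar" "dm t2 = dm a" "cd t2 = dm a'"
      "b \<in> Ar" "dm b = cd a" "cd b = cd a'" "a' \<cdot> t2 = b \<cdot> a" by (rule AA_arrE)
    from eG G' have a': "a' = pp Y" by simp
    from w G' PX A have w': "w \<in> Ar" "dm w = cd a" "cd w = I" by (simp_all add: hom_def)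
    from ew G' have uw: "u \<cdot> w = b" by simp
    let ?wa = "w \<cdot> a"
    have wa: "?wa \<in> Ar" "dm ?wa = dm a" "cd ?wa = I" using w' G' by (simp_all add: cs)
    have E1: "(Y \<cdot> u) \<cdot> ?wa = Y \<cdot> (b \<cdot> a)"
    proof -
      have "(Y \<cdot> u) \<cdot> ?wa = Y \<cdot> (u \<cdot> ?wa)" by (rule assoc[symmetric]) (use A wa in simp_all)
      also have "u \<cdot> ?wa = (u \<cdot> w) \<cdot> a" by (rule assoc) (use A w' G' in simp_all)
      finally show ?thesis using uw by simp
    qed
    have E2: "d1 \<cdot> (qq Y \<cdot> t2) = Y \<cdot> (b \<cdot> a)"
    proof -
      have "d1 \<cdot> (qq Y \<cdot> t2) = (d1 \<cdot> qq Y) \<cdot> t2" by (rule assoc) (use PY G' a' ics in simp_all)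
      also have "\<dots> = (Y \<cdot> pp Y) \<cdot> t2" using PY by simp
      also have "\<dots> = Y \<cdot> (pp Y \<cdot> t2)" by (rule assoc[symmetric]) (use A PY G' a' in simp_all)
      finally show ?thesis using G' a' by simp
    qed
    have fwa: "f' \<cdot> ?wa \<in> Ar" "cd (f' \<cdot> ?wa) = C1" "dm (f' \<cdot> ?wa) = dm a"
      "f \<cdot> ?wa \<in> Ar" "cd (f \<cdot> ?wa) = C1" "dm (f \<cdot> ?wa) = dm a"
      using B A wa by (simp_all add: cs)
    have qt: "qq Y \<cdot> t2 \<in> Ar" "cd (qq Y \<cdot> t2) = C1" "dm (qq Y \<cdot> t2) = dm a"
      using PY G' a' by (simp_all add: cs)
    have d0f'wa: "d0 \<cdot> (f' \<cdot> ?wa) = (Y \<cdot> u) \<cdot> ?wa"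
    proof -
      have "d0 \<cdot> (f' \<cdot> ?wa) = (d0 \<cdot> f') \<cdot> ?wa" by (rule assoc) (use B wa ics in simp_all)
      then show ?thesis using B by simp
    qed
    have d1f'wa: "d1 \<cdot> (f' \<cdot> ?wa) = X \<cdot> ?wa"
    proof -
      have "d1 \<cdot> (f' \<cdot> ?wa) = (d1 \<cdot> f') \<cdot> ?wa" by (rule assoc) (use B wa ics in simp_all)
      then show ?thesis using d1f' by simp
    qed
    have d0fwa: "d0 \<cdot> (f \<cdot> ?wa) = X \<cdot> ?wa"
    proof -
      have "d0 \<cdot> (f \<cdot> ?wa) = (d0 \<cdot> f) \<cdot> ?wa" by (rule assoc) (use A wa ics in simp_all)
      then show ?thesis using A by simp
    qed
    have d1fwa: "d1 \<cdot> (f \<cdot> ?wa) = (Y \<cdot> u) \<cdot> ?wa"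
    proof -
      have "d1 \<cdot> (f \<cdot> ?wa) = (d1 \<cdot> f) \<cdot> ?wa" by (rule assoc) (use A wa ics in simp_all)
      then show ?thesis using A by simp
    qed
    have mc: "d0 \<cdot> (f' \<cdot> ?wa) = d1 \<cdot> (qq Y \<cdot> t2)" using d0f'wa E1 E2 by simp
    let ?k = "mu (f' \<cdot> ?wa) (qq Y \<cdot> t2)"
    note K = mult[OF fwa(1,2) qt(1,2) _ mc]
    have K': "?k \<in> Ar" "dm ?k = dm a" "cd ?k = C1" "d1 \<cdot> ?k = X \<cdot> ?wa"
      using K fwa qt d1f'wa by simp_all
    note S = med[OF PB[OF A(11,16)], of ?wa ?k]
    let ?s = "med (pp X) (qq X) ?wa ?k"
    have S': "?s \<in> Ar" "dm ?s = dm a" "cd ?s = dm (pp X)" "pp X \<cdot> ?s = ?wa" "qq X \<cdot> ?s = ?k"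
      using S wa K' A ics by simp_all
    have comp_q: "qq Y \<cdot> (tm X Y u f \<cdot> s) = mu (f \<cdot> ?wa) (qq X \<cdot> s)"
      if "s \<in> Ar" "cd s = dm (pp X)" "pp X \<cdot> s = ?wa" for s
      using tm_s(2)[OF F that(1,2)] that(3) by simp
    let ?H = "(a,(?s,w),pp X)"
    show "\<exists>!H. H \<in> hom AA (cat_dom AA G) (cat_dom AA (pp X, (tm X Y u f, u), pp Y)) \<and>
               cod_arr H = w \<and> cat_comp AA (pp X, (tm X Y u f, u), pp Y) H = G"
    proof (rule ex1I[of _ ?H])
      have Hin: "?H \<in> cat_arr AA" unfolding AA_arr using G' S' w' PX A by (intro conjI) simp_all
      have ts: "tm X Y u f \<cdot> ?s = t2"
      proof (rule pb_uniq[OF PB[OF A(12,15)]])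
        show "pp Y \<cdot> (tm X Y u f \<cdot> ?s) = pp Y \<cdot> t2"
        proof -
          have "pp Y \<cdot> (tm X Y u f \<cdot> ?s) = u \<cdot> ?wa" using tm_s(1)[OF F S'(1,3)] S' by simp
          also have "\<dots> = (u \<cdot> w) \<cdot> a" by (rule assoc) (use A w' G' in simp_all)
          finally show ?thesis using uw G' a' by simp
        qed
        show "qq Y \<cdot> (tm X Y u f \<cdot> ?s) = qq Y \<cdot> t2"
        proof -
          have "qq Y \<cdot> (tm X Y u f \<cdot> ?s) = mu (f \<cdot> ?wa) ?k" using comp_q[OF S'(1,3,4)] S' by simp
          also have "\<dots> = mu (mu (f \<cdot> ?wa) (f' \<cdot> ?wa)) (qq Y \<cdot> t2)"
            by (rule mult_assoc[symmetric]) (use fwa qt mc d0fwa d1f'wa in simp_all)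
          also have "mu (f \<cdot> ?wa) (f' \<cdot> ?wa) = mu f f' \<cdot> ?wa"
            by (rule mult_nat) (use A B wa in \<open>simp_all add: cs\<close>)
          also have "mu f f' \<cdot> ?wa = ii \<cdot> (d1 \<cdot> (qq Y \<cdot> t2))"
          proof -
            have "(ii \<cdot> (Y \<cdot> u)) \<cdot> ?wa = ii \<cdot> ((Y \<cdot> u) \<cdot> ?wa)" by (rule assoc[symmetric]) (use A wa ics in \<open>simp_all add: cs\<close>)
            then show ?thesis using f'(2) E1 E2 by simp
          qed
          also have "mu (ii \<cdot> (d1 \<cdot> (qq Y \<cdot> t2))) (qq Y \<cdot> t2) = qq Y \<cdot> t2"
            by (rule mult_idl) (use qt in simp_all)
          finally show ?thesis .
        qed
      qed (use tm_s(3,4,5)[OF F S'(1,3)] S' G' a' in simp_all)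
      show "?H \<in> hom AA (cat_dom AA G) (cat_dom AA (pp X, (tm X Y u f, u), pp Y)) \<and>
               cod_arr ?H = w \<and> cat_comp AA (pp X, (tm X Y u f, u), pp Y) ?H = G"
        using Hin ts uw G' a' by (simp add: hom_def)
    next
      fix H assume H: "H \<in> hom AA (cat_dom AA G) (cat_dom AA (pp X, (tm X Y u f, u), pp Y)) \<and>
               cod_arr H = w \<and> cat_comp AA (pp X, (tm X Y u f, u), pp Y) H = G"
      then have Har: "H \<in> cat_arr AA" by (simp add: hom_def)
      then obtain a0 s' w0 c where H': "H = (a0,(s',w0),c)" "a0 \<in> Ar" "c \<in> Ar" "s' \<in> Ar" "dm s' = dm a0" "cd s' = dm c"
        "w0 \<in> Ar" "dm w0 = cd a0" "cd w0 = cd c" "c \<cdot> s' = w0 \<cdot> a0" by (rule AA_arrE)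
      from H H' G' have e0: "a0 = a" "c = pp X" "w0 = w" by (simp_all add: hom_def)
      from H H' G' e0 have ts': "tm X Y u f \<cdot> s' = t2" by simp
      have ps': "pp X \<cdot> s' = ?wa" using H' e0 by simp
      have s'a: "s' \<in> Ar" "cd s' = dm (pp X)" "dm s' = dm a" using H' e0 by simp_all
      have qs': "qq X \<cdot> s' \<in> Ar" "cd (qq X \<cdot> s') = C1" "dm (qq X \<cdot> s') = dm a"
        using PX s'a by (simp_all add: cs)
      have d1qs: "d1 \<cdot> (qq X \<cdot> s') = X \<cdot> ?wa"
      proof -
        have "d1 \<cdot> (qq X \<cdot> s') = (d1 \<cdot> qq X) \<cdot> s'" by (rule assoc) (use PX s'a ics in simp_all)
        also have "\<dots> = (X \<cdot> pp X) \<cdot> s'" using PX by simp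
        also have "\<dots> = X \<cdot> (pp X \<cdot> s')" by (rule assoc[symmetric]) (use A PX s'a in simp_all)
        finally show ?thesis using ps' by simp
      qed
      have qY: "qq Y \<cdot> t2 = mu (f \<cdot> ?wa) (qq X \<cdot> s')" using comp_q[OF s'a(1,2) ps'] ts' by simp
      have "?k = mu (f' \<cdot> ?wa) (mu (f \<cdot> ?wa) (qq X \<cdot> s'))" using qY by simp
      also have "\<dots> = mu (mu (f' \<cdot> ?wa) (f \<cdot> ?wa)) (qq X \<cdot> s')"
        by (rule mult_assoc[symmetric]) (use fwa qs' d1qs d0fwa d0f'wa d1fwa in simp_all)
      also have "mu (f' \<cdot> ?wa) (f \<cdot> ?wa) = mu f' f \<cdot> ?wa"
        by (rule mult_nat) (use A B wa in \<open>simp_all add: cs\<close>)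
      also have "mu f' f \<cdot> ?wa = ii \<cdot> (d1 \<cdot> (qq X \<cdot> s'))"
      proof -
        have "(ii \<cdot> X) \<cdot> ?wa = ii \<cdot> (X \<cdot> ?wa)" by (rule assoc[symmetric]) (use A wa ics in \<open>simp_all add: cs\<close>)
        then show ?thesis using f'(3) d1qs by simp
      qed
      also have "mu (ii \<cdot> (d1 \<cdot> (qq X \<cdot> s'))) (qq X \<cdot> s') = qq X \<cdot> s'"
        by (rule mult_idl) (use qs' in simp_all)
      finally have qk: "?k = qq X \<cdot> s'" .
      have "s' = ?s"
        by (rule pb_uniq[OF PB[OF A(11,16)]]) (use s'a S' ps' qk in simp_all)
      then show "H = ?H" using H' e0 by simp
    qed
  qed
qed


end

theorem proposition21:
  fixes B :: "('o, 'm) category" and C :: "('o, 'm) internal_cat"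
  assumes "is_category B"
    and "has_finite_limits B"
    and "is_internal_category B C"
  shows "is_concrete_fibration B (\<lambda>_. True) (Fam B C) proj_obj proj_arr"
proof -
  interpret ctx B C using assms by unfold_locales
  show ?thesis unfolding is_concrete_fibration_def
  proof (intro conjI exI[of _ Uo] exI[of _ Um] ballI impI)
    show "is_fibration (Fam B C) B proj_obj proj_arr" by (rule proj_fib)
    show "is_functor (Fam B C) (arrow_cat B) Uo Um" by (rule U_functor)
    show "faithful (Fam B C) Um" by (rule U_faithful)
  next
    fix S assume "S \<in> cat_obj (Fam B C)"
    then obtain I X where S: "S = (I,X)" "X \<in> cat_arr B" "cat_dom B X = I" "cat_cod B X = C0"
      by (auto simp: Fam_obj)
    show "cod_obj B (Uo S) = proj_obj S" using S PBs[OF S(2,4)] by (simp add: Uo_def)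
    show "True" by simp
  next
    fix F assume "F \<in> cat_arr (Fam B C)"
    then obtain I X u f J Y where F: "F = ((I,X),(u,f),(J,Y))" "FA I X u f J Y" by (rule Fam_arrE)
    show "cod_arr (Um F) = proj_arr F" using F by simp
  next
    fix F assume F0: "F \<in> cat_arr (Fam B C)" and c: "is_cartesian (Fam B C) B proj_obj proj_arr F"
    from F0 obtain I X u f J Y where F: "F = ((I,X),(u,f),(J,Y))" "FA I X u f J Y" by (rule Fam_arrE)
    show "is_cartesian (arrow_cat B) B (cod_obj B) cod_arr (Um F)" using Um_cart[OF F(2)] c F by simp
  qed
qed

end
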